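(* Let $a,b,c,d,e\in\mathbb{Z}$ all be nonzero, with $a\equiv 0$, $b\equiv -1$, $c\equiv d\equiv 1$, $e\equiv 4\pmod 7$, and let $W\subset(\mathbb{P}^1)^3$ be the smooth, non-degenerate Markoff-type K3 surface over $\mathbb{Q}$ defined by the $(2,2,2)$-form with affine equation $$ax^2y^2z^2 + b(x^2y^2+x^2z^2+y^2z^2) + cxyz + d(x^2+y^2+z^2) + e = 0.$$ Let $U = W\setminus\{rst=0\}$ and $\mathcal{U}$ the integral model of $U$ over $\mathbb{Z}$ defined by the same equation. Then $\mathcal{U}(\mathbb{Z})$ is not Zariski-dense in $U$.
   Context: Coordinates on $(\mathbb{P}^1)^3$ are $([x:r],[y:s],[z:t])$ and the surface is the zero locus of the degree-$(2,2,2)$ bihomogenization. For a form of this shape, non-degenerate means $c\neq 0$, $be\neq d^2$ and $ad\neq b^2$ (equivalently, the projections $\pi_{ij}:W\to\mathbb{P}^1\times\mathbb{P}^1$ to pairs of factors are quasi-finite). $\mathcal{U}(\mathbb{Z})$ is the set of integer solutions $(x,y,z)\in\mathbb{Z}^3$. *)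

theory Defs
  imports "HOL-Analysis.Analysis" "HOL-Number_Theory.Cong"
begin

text \<open>Bihomogenized (2,2,2)-form on (P^1)^3 with coordinates ([x:r],[y:s],[z:t]).\<close>
definition markoffK3_F ::
  "int \<Rightarrow> int \<Rightarrow> int \<Rightarrow> int \<Rightarrow> int \<Rightarrow>
   complex \<Rightarrow> complex \<Rightarrow> complex \<Rightarrow> complex \<Rightarrow> complex \<Rightarrow> complex \<Rightarrow> complex" where
  "markoffK3_F a b c d e x r y s z t =
     of_int a * x^2 * y^2 * z^2
   + of_int b * (x^2 * y^2 * t^2 + x^2 * z^2 * s^2 + y^2 * z^2 * r^2)
   + of_int c * x * y * z * r * s * t
   + of_int d * (x^2 * s^2 * t^2 + y^2 * r^2 * t^2 + z^2 * r^2 * s^2)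
   + of_int e * r^2 * s^2 * t^2"

definition markoffK3_aff ::
  "int \<Rightarrow> int \<Rightarrow> int \<Rightarrow> int \<Rightarrow> int \<Rightarrow> 'a::comm_ring_1 \<Rightarrow> 'a \<Rightarrow> 'a \<Rightarrow> 'a" where
  "markoffK3_aff a b c d e x y z =
     of_int a * x^2 * y^2 * z^2 + of_int b * (x^2 * y^2 + x^2 * z^2 + y^2 * z^2)
   + of_int c * x * y * z + of_int d * (x^2 + y^2 + z^2) + of_int e"

definition markoffK3_singular_at ::
  "int \<Rightarrow> int \<Rightarrow> int \<Rightarrow> int \<Rightarrow> int \<Rightarrow>
   complex \<Rightarrow> complex \<Rightarrow> complex \<Rightarrow> complex \<Rightarrow> complex \<Rightarrow> complex \<Rightarrow> bool" where
  "markoffK3_singular_at a b c d e x r y s z t \<longleftrightarrow>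
     (x, r) \<noteq> (0, 0) \<and> (y, s) \<noteq> (0, 0) \<and> (z, t) \<noteq> (0, 0) \<and>
     markoffK3_F a b c d e x r y s z t = 0 \<and>
     deriv (\<lambda>u. markoffK3_F a b c d e u r y s z t) x = 0 \<and>
     deriv (\<lambda>u. markoffK3_F a b c d e x u y s z t) r = 0 \<and>
     deriv (\<lambda>u. markoffK3_F a b c d e x r u s z t) y = 0 \<and>
     deriv (\<lambda>u. markoffK3_F a b c d e x r y u z t) s = 0 \<and>
     deriv (\<lambda>u. markoffK3_F a b c d e x r y s u t) z = 0 \<and>
     deriv (\<lambda>u. markoffK3_F a b c d e x r y s z u) t = 0"

definition markoffK3_smooth :: "int \<Rightarrow> int \<Rightarrow> int \<Rightarrow> int \<Rightarrow> int \<Rightarrow> bool" where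
  "markoffK3_smooth a b c d e \<longleftrightarrow>
     (\<forall>x r y s z t. \<not> markoffK3_singular_at a b c d e x r y s z t)"

definition markoffK3_nondegenerate :: "int \<Rightarrow> int \<Rightarrow> int \<Rightarrow> int \<Rightarrow> int \<Rightarrow> bool" where
  "markoffK3_nondegenerate a b c d e \<longleftrightarrow> c \<noteq> 0 \<and> b * e \<noteq> d^2 \<and> a * d \<noteq> b^2"

definition poly3_eval :: "nat \<Rightarrow> (nat \<Rightarrow> nat \<Rightarrow> nat \<Rightarrow> rat) \<Rightarrow> 'a::field_char_0 \<Rightarrow> 'a \<Rightarrow> 'a \<Rightarrow> 'a" where
  "poly3_eval N G x y z =
     (\<Sum>i\<le>N. \<Sum>j\<le>N. \<Sum>k\<le>N. of_rat (G i j k) * x^i * y^j * z^k)"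

definition markoffK3_U_zariski_dense ::
  "int \<Rightarrow> int \<Rightarrow> int \<Rightarrow> int \<Rightarrow> int \<Rightarrow> (complex \<times> complex \<times> complex) set \<Rightarrow> bool" where
  "markoffK3_U_zariski_dense a b c d e S \<longleftrightarrow>
     (\<forall>N G. (\<forall>(x, y, z) \<in> S. poly3_eval N G x y z = 0) \<longrightarrow>
        (\<forall>x y z. markoffK3_aff a b c d e x y z = (0::complex) \<longrightarrow> poly3_eval N G x y z = 0))"

definition markoffK3_int_points :: "int \<Rightarrow> int \<Rightarrow> int \<Rightarrow> int \<Rightarrow> int \<Rightarrow> (complex \<times> complex \<times> complex) set" where
  "markoffK3_int_points a b c d e =
     {(of_int x, of_int y, of_int z) | x y z :: int. markoffK3_aff a b c d e x y z = 0}"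

end

theory Submission
  imports Defs "HOL-Computational_Algebra.Polynomial"
begin

lemma bound_aux:
  fixes a b c d e x y z :: int
  assumes a: "a \<noteq> 0" and eq: "markoffK3_aff a b c d e x y z = 0"
  shows "x^2 \<le> 3*\<bar>b\<bar>+2*\<bar>c\<bar>+3*\<bar>d\<bar>+\<bar>e\<bar> \<or> y^2 \<le> 3*\<bar>b\<bar>+2*\<bar>c\<bar>+3*\<bar>d\<bar>+\<bar>e\<bar> \<or> z^2 \<le> 3*\<bar>b\<bar>+2*\<bar>c\<bar>+3*\<bar>d\<bar>+\<bar>e\<bar>"
proof (rule ccontr)
  define K where "K = 3*\<bar>b\<bar>+2*\<bar>c\<bar>+3*\<bar>d\<bar>+\<bar>e\<bar>"
  define X where "X = x^2" define Y where "Y = y^2" define Z where "Z = z^2"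
  assume "\<not> ?thesis"
  hence hX: "X \<ge> K+1" and hY: "Y \<ge> K+1" and hZ: "Z \<ge> K+1" by (auto simp: K_def X_def Y_def Z_def)
  have K0: "K \<ge> 0" by (simp add: K_def)
  define L where "L = K + 1"
  have L1: "L \<ge> 1" using K0 by (simp add: L_def)
  have e1: "a*(X*Y*Z) = -(b*(X*Y+X*Z+Y*Z) + c*(x*y*z) + d*(X+Y+Z) + e)"
    using eq unfolding markoffK3_aff_def X_def Y_def Z_def by (simp add: algebra_simps power2_eq_square)
  have xyz: "\<bar>x*y*z\<bar> \<le> X*Y + Z"
  proof -
    have "0 \<le> (\<bar>x*y\<bar> - \<bar>z\<bar>)^2" by simp
    hence "2*(\<bar>x*y\<bar>*\<bar>z\<bar>) \<le> \<bar>x*y\<bar>^2 + \<bar>z\<bar>^2" by (simp add: power2_eq_square algebra_simps)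
    moreover have "\<bar>x*y\<bar>^2 = X*Y" "\<bar>z\<bar>^2 = Z" by (simp_all add: X_def Y_def Z_def power_mult_distrib)
    moreover have "\<bar>x*y*z\<bar> = \<bar>x*y\<bar>*\<bar>z\<bar>" by (simp add: abs_mult)
    moreover have "0 \<le> X*Y + Z" by (simp add: X_def Y_def Z_def)
    ultimately show ?thesis by linarith
  qed
  have X0: "X \<ge> L" "Y \<ge> L" "Z \<ge> L" using hX hY hZ by (simp_all add: L_def)
  have pos: "X > 0" "Y > 0" "Z > 0" using X0 L1 by auto
  have b1: "L*(X*Y) \<le> X*Y*Z" "L*(X*Z) \<le> X*Y*Z" "L*(Y*Z) \<le> X*Y*Z"
    using X0 pos by (simp_all add: mult_right_mono mult_left_mono algebra_simps)
  have b2: "L*X \<le> X*Y*Z" "L*Y \<le> X*Y*Z" "L*Z \<le> X*Y*Z" "L \<le> X*Y*Z"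
  proof -
    have "0 < Y*Z" "0 < X*Z" "0 < X*Y" using pos by simp_all
    hence "1 \<le> Y*Z" "1 \<le> X*Z" "1 \<le> X*Y" by simp_all
    thus "L*X \<le> X*Y*Z" "L*Y \<le> X*Y*Z" "L*Z \<le> X*Y*Z"
      using X0 pos
      by (smt (verit) mult.commute mult.left_commute mult_le_cancel_left1 mult_mono)+
    have "0 < X*Y*Z" using pos by simp
    hence "1 \<le> X*Y*Z" by simp
    thus "L \<le> X*Y*Z" using X0 b1 pos by (smt (verit) mult_le_cancel_left1 mult_right_mono)
  qed
  have R: "\<bar>a*(X*Y*Z)\<bar> \<le> \<bar>b\<bar>*(X*Y+X*Z+Y*Z) + \<bar>c\<bar>*(X*Y+Z) + \<bar>d\<bar>*(X+Y+Z) + \<bar>e\<bar>"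
  proof -
    have "\<bar>a*(X*Y*Z)\<bar> \<le> \<bar>b*(X*Y+X*Z+Y*Z)\<bar> + \<bar>c*(x*y*z)\<bar> + \<bar>d*(X+Y+Z)\<bar> + \<bar>e\<bar>"
      unfolding e1 by linarith
    moreover have "\<bar>b*(X*Y+X*Z+Y*Z)\<bar> = \<bar>b\<bar>*(X*Y+X*Z+Y*Z)" using pos by (simp add: abs_mult)
    moreover have "\<bar>d*(X+Y+Z)\<bar> = \<bar>d\<bar>*(X+Y+Z)" using pos by (simp add: abs_mult)
    moreover have "\<bar>c*(x*y*z)\<bar> \<le> \<bar>c\<bar>*(X*Y+Z)" using xyz by (simp add: abs_mult mult_left_mono)
    ultimately show ?thesis by linarith
  qed
  have "L * \<bar>a*(X*Y*Z)\<bar> \<le> K*(X*Y*Z)"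
  proof -
    have "L * \<bar>a*(X*Y*Z)\<bar> \<le> L*(\<bar>b\<bar>*(X*Y+X*Z+Y*Z) + \<bar>c\<bar>*(X*Y+Z) + \<bar>d\<bar>*(X+Y+Z) + \<bar>e\<bar>)"
      using R L1 by (simp add: mult_left_mono)
    also have "\<dots> = \<bar>b\<bar>*(L*(X*Y)+L*(X*Z)+L*(Y*Z)) + \<bar>c\<bar>*(L*(X*Y)+L*Z) + \<bar>d\<bar>*(L*X+L*Y+L*Z) + \<bar>e\<bar>*L"
      by (simp add: algebra_simps)
    also have "\<dots> \<le> \<bar>b\<bar>*(3*(X*Y*Z)) + \<bar>c\<bar>*(2*(X*Y*Z)) + \<bar>d\<bar>*(3*(X*Y*Z)) + \<bar>e\<bar>*(X*Y*Z)"
      using b1 b2 by (intro add_mono mult_left_mono) auto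
    also have "\<dots> = K*(X*Y*Z)" by (simp add: K_def algebra_simps)
    finally show ?thesis .
  qed
  moreover have "X*Y*Z \<le> \<bar>a*(X*Y*Z)\<bar>"
  proof -
    have "\<bar>a*(X*Y*Z)\<bar> = \<bar>a\<bar>*(X*Y*Z)" using pos by (simp add: abs_mult)
    moreover have "1 \<le> \<bar>a\<bar>" using a by linarith
    moreover have "0 < X*Y*Z" using pos by simp
    ultimately show ?thesis by (metis mult_right_mono mult_1 less_imp_le)
  qed
  moreover have "X*Y*Z > 0" using pos by simp
  ultimately have "L*(X*Y*Z) \<le> K*(X*Y*Z)" using L1
    by (meson mult_left_mono order_trans less_imp_le zero_le_one order.trans)
  hence "(X*Y*Z) \<le> 0" unfolding L_def by (simp add: algebra_simps)
  with \<open>X*Y*Z > 0\<close> show False by simp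
qed
lemma coeff_prod_Ints:
  "finite A \<Longrightarrow> coeff (\<Prod>v\<in>A. [:- of_int v, 1:] :: complex poly) i \<in> \<int>"
proof (induction A arbitrary: i rule: finite_induct)
  case empty
  then show ?case by (cases i) auto
next
  case (insert v A)
  let ?q = "(\<Prod>v\<in>A. [:- of_int v, 1:] :: complex poly)"
  have "(\<Prod>v\<in>insert v A. [:- of_int v, 1:] :: complex poly) = smult (- of_int v) ?q + pCons 0 ?q"
    using insert by (simp add: mult_pCons_left)
  moreover have "coeff (pCons 0 ?q) i \<in> \<int>" using insert by (cases i) auto
  ultimately show ?case using insert by simp
qed

lemma no_small_root:
  fixes d e u :: int
  assumes "[d = 1] (mod 7)" "[e = 4] (mod 7)"
  shows "\<not> (7::int) dvd (d*u^2 + e)"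
proof
  assume h: "(7::int) dvd (d*u^2+e)"
  have "[d*u^2+e = 1*u^2+4] (mod 7)" using assms by (intro cong_add cong_mult) auto
  hence "(7::int) dvd (u^2+4)" using h by (simp add: cong_dvd_iff)
  hence "(u^2+4) mod 7 = 0" by simp
  moreover have "(u^2+4) mod 7 = ((u mod 7)^2 + 4) mod 7"
    by (metis mod_add_left_eq power_mod)
  ultimately have h0: "((u mod 7)^2 + 4) mod 7 = 0" by simp
  have "u mod 7 \<ge> 0" "u mod 7 < 7" by simp_all
  hence "u mod 7 = 0 \<or> u mod 7 = 1 \<or> u mod 7 = 2 \<or> u mod 7 = 3 \<or> u mod 7 = 4 \<or> u mod 7 = 5 \<or> u mod 7 = 6" by linarith
  thus False using h0 by (elim disjE) simp_all
qed

lemma quad_root: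
  fixes A B C :: complex
  assumes "B \<noteq> 0"
  shows "\<exists>z. A*z^2 + B*z + C = 0"
proof (cases "A = 0")
  case True
  then show ?thesis using assms by (intro exI[of _ "-C/B"]) (simp add: field_simps)
next
  case False
  define w where "w = csqrt (B^2 - 4*A*C)"
  have w2: "w^2 = B^2 - 4*A*C" by (simp add: w_def)
  define z where "z = (-B + w)/(2*A)"
  have "4*A*(A*z^2 + B*z + C) = (2*A*z + B)^2 - (B^2 - 4*A*C)" by (simp add: algebra_simps power2_eq_square)
  also have "2*A*z + B = w" using False by (simp add: z_def field_simps)
  finally have "4*A*(A*z^2 + B*z + C) = 0" using w2 by simp
  then show ?thesis using False by auto
qed

lemma eval_prod:
  fixes pc :: "complex poly" and g :: "nat \<Rightarrow> rat"
  assumes "\<And>i. of_rat (g i) = coeff pc i"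
  shows "poly3_eval (degree pc) (\<lambda>i j k. g i * g j * g k) x y z = poly pc x * poly pc y * poly pc z"
proof -
  have "poly3_eval (degree pc) (\<lambda>i j k. g i * g j * g k) x y z =
     (\<Sum>i\<le>degree pc. \<Sum>j\<le>degree pc. \<Sum>k\<le>degree pc. (coeff pc i * x^i) * (coeff pc j * y^j) * (coeff pc k * z^k))"
    unfolding poly3_eval_def by (simp add: of_rat_mult assms mult_ac)
  also have "\<dots> = (\<Sum>i\<le>degree pc. coeff pc i * x^i) * (\<Sum>j\<le>degree pc. coeff pc j * y^j) * (\<Sum>k\<le>degree pc. coeff pc k * z^k)"
  proof -
    have "\<And>i j. (\<Sum>k\<le>degree pc. (coeff pc i * x^i) * (coeff pc j * y^j) * (coeff pc k * z^k))
       = (coeff pc i * x^i) * (coeff pc j * y^j) * (\<Sum>k\<le>degree pc. coeff pc k * z^k)"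
      by (simp add: sum_distrib_left)
    moreover have "\<And>i. (\<Sum>j\<le>degree pc. (coeff pc i * x^i) * (coeff pc j * y^j) * (\<Sum>k\<le>degree pc. coeff pc k * z^k))
       = (coeff pc i * x^i) * (\<Sum>j\<le>degree pc. coeff pc j * y^j) * (\<Sum>k\<le>degree pc. coeff pc k * z^k)"
      by (simp only: sum_distrib_right[symmetric] sum_distrib_left[symmetric])
    ultimately show ?thesis by (simp add: sum_distrib_right)
  qed
  also have "\<dots> = poly pc x * poly pc y * poly pc z" by (simp add: poly_altdef)
  finally show ?thesis .
qed

theorem proposition6p1:
  fixes a b c d e :: int
  assumes "a \<noteq> 0" "b \<noteq> 0" "c \<noteq> 0" "d \<noteq> 0" "e \<noteq> 0"
    and "[a = 0] (mod 7)" "[b = -1] (mod 7)" "[c = 1] (mod 7)" "[d = 1] (mod 7)" "[e = 4] (mod 7)"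
    and "markoffK3_smooth a b c d e"
    and "markoffK3_nondegenerate a b c d e"
  shows "\<not> markoffK3_U_zariski_dense a b c d e (markoffK3_int_points a b c d e)"
proof -
  define K where "K = 3*\<bar>b\<bar>+2*\<bar>c\<bar>+3*\<bar>d\<bar>+\<bar>e\<bar>"
  define V where "V = {-K..K}"
  define pc where "pc = (\<Prod>v\<in>V. [:- of_int v, 1:] :: complex poly)"
  have finV: "finite V" by (simp add: V_def)
  have pc_eval: "poly pc t = (\<Prod>v\<in>V. (t - of_int v))" for t
    by (simp add: pc_def poly_prod)
  have pc_zero: "poly pc t = 0 \<longleftrightarrow> (\<exists>v\<in>V. t = of_int v)" for t
    using finV by (simp add: pc_eval)
  define g where "g i = (SOME q. of_rat q = coeff pc i)" for i
  have hg: "of_rat (g i) = coeff pc i" for i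
  proof -
    have "coeff pc i \<in> \<int>" unfolding pc_def using finV by (rule coeff_prod_Ints)
    hence "coeff pc i \<in> \<rat>" using Ints_subset_Rats by blast
    then obtain q where "coeff pc i = of_rat q" by (auto elim: Rats_cases)
    then show ?thesis unfolding g_def by (metis (mono_tags, lifting) someI)
  qed
  define G where "G = (\<lambda>i j k. g i * g j * g k)"
  have ev: "poly3_eval (degree pc) G x y z = poly pc x * poly pc y * poly pc z" for x y z :: complex
    unfolding G_def by (rule eval_prod[OF hg])
  have small: "\<bar>u\<bar> \<le> K" if "u^2 \<le> K" for u :: int
  proof -
    have "\<bar>u\<bar> \<le> u^2"
    proof (cases "u = 0")
      case False
      hence "1 \<le> \<bar>u\<bar>" by linarith
      hence "1 * \<bar>u\<bar> \<le> \<bar>u\<bar> * \<bar>u\<bar>" by (intro mult_right_mono) auto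
      thus ?thesis by (simp add: power2_eq_square abs_mult_self_eq)
    qed simp
    thus ?thesis using that by linarith
  qed
  have vanish: "\<forall>(x, y, z) \<in> markoffK3_int_points a b c d e. poly3_eval (degree pc) G x y z = 0"
  proof (clarify)
    fix x y z assume "(x, y, z) \<in> markoffK3_int_points a b c d e"
    then obtain x' y' z' :: int where xyz: "x = of_int x'" "y = of_int y'" "z = of_int z'"
      and eq: "markoffK3_aff a b c d e x' y' z' = 0"
      unfolding markoffK3_int_points_def by blast
    from bound_aux[OF assms(1) eq] have "x'^2 \<le> K \<or> y'^2 \<le> K \<or> z'^2 \<le> K" unfolding K_def .
    hence "x' \<in> V \<or> y' \<in> V \<or> z' \<in> V" using small unfolding V_def by fastforce
    hence "poly pc x = 0 \<or> poly pc y = 0 \<or> poly pc z = 0" using pc_zero xyz by blast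
    thus "poly3_eval (degree pc) G x y z = 0" using ev by auto
  qed
  define s :: complex where "s = 7/2"
  define A where "A = of_int a * s^4 + 2 * of_int b * s^2 + of_int d"
  define B where "B = of_int c * s^2"
  define C where "C = of_int b * s^4 + 2 * of_int d * s^2 + of_int e"
  have "B \<noteq> 0" using assms(3) by (simp add: B_def s_def)
  then obtain z where hz: "A*z^2 + B*z + C = 0" using quad_root by blast
  have onW: "markoffK3_aff a b c d e s s z = 0"
  proof -
    have "markoffK3_aff a b c d e s s z = A*z^2 + B*z + C"
      unfolding markoffK3_aff_def A_def B_def C_def by algebra
    thus ?thesis using hz by simp
  qed
  have s_ok: "poly pc s \<noteq> 0"
  proof
    assume "poly pc s = 0"
    then obtain v where "s = of_int v" using pc_zero by blast
    hence "(7::complex) = of_int (2* v)" by (simp add: s_def field_simps)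
    hence "(7::int) = 2* v" by (metis of_int_eq_iff of_int_numeral)
    thus False by presburger
  qed
  have z_ok: "poly pc z \<noteq> 0"
  proof
    assume "poly pc z = 0"
    then obtain v where zv: "z = of_int v" using pc_zero by blast
    define E where "E = 7*(343*a* v^2 + 343*b + 56*b* v^2 + 28*c* v + 56*d) + 16*(d* v^2 + e)"
    have "(16::complex) * (A*z^2 + B*z + C) = of_int E"
      unfolding E_def A_def B_def C_def zv s_def by (simp add: algebra_simps power2_eq_square power4_eq_xxxx)
    hence "E = 0" using hz by simp
    hence "16*(d * v^2+e) = 7*(-(343*a * v^2 + 343*b + 56*b * v^2 + 28*c * v + 56*d))" unfolding E_def by linarith
    hence "(7::int) dvd 16*(d * v^2+e)" by (metis dvd_triv_left)
    moreover have "\<And>m::int. 7 dvd 16*m \<Longrightarrow> 7 dvd m" by presburger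
    ultimately have "(7::int) dvd (d* v^2+e)" by blast
    thus False using no_small_root[OF assms(9,10)] by blast
  qed
  have "poly3_eval (degree pc) G s s z \<noteq> 0" using ev s_ok z_ok by simp
  thus ?thesis unfolding markoffK3_U_zariski_dense_def using vanish onW by blast
qed

end
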